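(* Let $p$ be a prime with $\frac12 n<p\le n-3$, let $\pi\in A_n$ have a cycle of length $p$ in its disjoint cycle decomposition, and let $C$ be a conjugacy class of $S_n$. Then \begin{align*} \#\{\sigma\in A_n:~[\pi,\sigma]\in C \text{ and } \langle\pi,\sigma\rangle=A_n\} =\;&\#\{\sigma\in A_n:~[\pi,\sigma]\in C\}\\ &-\#\{\sigma\in A_n:~[\pi,\sigma]\in C \text{ and } \langle\pi,\sigma\rangle\text{ is not transitive on }\{1,\dots,n\}\}. \end{align*}
   Context: $[\pi,\sigma]=\pi^{-1}\sigma^{-1}\pi\sigma$. *)

theory Defs
  imports Complex_Main "HOL-Computational_Algebra.Primes" "HOL-Algebra.Sym_Groups" "HOL-Combinatorics.Orbits"
begin

definition commutator_Sn :: "nat \<Rightarrow> (nat \<Rightarrow> nat) \<Rightarrow> (nat \<Rightarrow> nat) \<Rightarrow> (nat \<Rightarrow> nat)" where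
  "commutator_Sn n \<pi> \<sigma> =
     inv\<^bsub>sym_group n\<^esub> \<pi> \<otimes>\<^bsub>sym_group n\<^esub> inv\<^bsub>sym_group n\<^esub> \<sigma>
       \<otimes>\<^bsub>sym_group n\<^esub> \<pi> \<otimes>\<^bsub>sym_group n\<^esub> \<sigma>"

definition is_conj_class_Sn :: "nat \<Rightarrow> (nat \<Rightarrow> nat) set \<Rightarrow> bool" where
  "is_conj_class_Sn n C \<longleftrightarrow> (\<exists>\<rho>\<in>carrier (sym_group n).
     C = {\<tau> \<otimes>\<^bsub>sym_group n\<^esub> \<rho> \<otimes>\<^bsub>sym_group n\<^esub> inv\<^bsub>sym_group n\<^esub> \<tau> | \<tau>. \<tau> \<in> carrier (sym_group n)})"

definition transitive_on_Sn :: "nat \<Rightarrow> (nat \<Rightarrow> nat) set \<Rightarrow> bool" where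
  "transitive_on_Sn n H \<longleftrightarrow> (\<forall>x\<in>{1..n}. \<forall>y\<in>{1..n}. \<exists>g\<in>H. g x = y)"

end

theory Submission
  imports Defs
begin

definition PG :: "nat set \<Rightarrow> (nat \<Rightarrow> nat) set \<Rightarrow> bool" where
  "PG \<Omega> H \<longleftrightarrow> id \<in> H \<and> (\<forall>g\<in>H. \<forall>h\<in>H. g \<circ> h \<in> H) \<and> (\<forall>g\<in>H. inv' g \<in> H \<and> g permutes \<Omega>)"

definition stab :: "(nat \<Rightarrow> nat) set \<Rightarrow> nat set \<Rightarrow> (nat \<Rightarrow> nat) set" where
  "stab H S = {h\<in>H. \<forall>x\<in>S. h x = x}"

definition trans_on :: "nat set \<Rightarrow> (nat \<Rightarrow> nat) set \<Rightarrow> bool" where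
  "trans_on X H \<longleftrightarrow> (\<forall>x\<in>X. \<forall>y\<in>X. \<exists>g\<in>H. g x = y)"

definition cyc :: "(nat \<Rightarrow> nat) \<Rightarrow> nat set \<Rightarrow> nat \<Rightarrow> bool" where
  "cyc c D p \<longleftrightarrow> (\<forall>x. x \<notin> D \<longrightarrow> c x = x) \<and> c ^^ p = id \<and> card D = p \<and> finite D
     \<and> (\<forall>x\<in>D. c x \<in> D) \<and> (\<exists>x0\<in>D. \<forall>y\<in>D. \<exists>i. (c ^^ i) x0 = y)"

lemma PG_id: "PG \<Omega> H \<Longrightarrow> id \<in> H" by (simp add: PG_def)
lemma PG_comp: "PG \<Omega> H \<Longrightarrow> g \<in> H \<Longrightarrow> h \<in> H \<Longrightarrow> g \<circ> h \<in> H" by (simp add: PG_def)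
lemma PG_inv: "PG \<Omega> H \<Longrightarrow> g \<in> H \<Longrightarrow> inv' g \<in> H" by (simp add: PG_def)
lemma PG_perm: "PG \<Omega> H \<Longrightarrow> g \<in> H \<Longrightarrow> g permutes \<Omega>" by (simp add: PG_def)

lemma PG_pow: "PG \<Omega> H \<Longrightarrow> g \<in> H \<Longrightarrow> g ^^ k \<in> H"
  by (induction k) (auto simp: PG_id PG_comp)

lemma PG_inv_l: "PG \<Omega> H \<Longrightarrow> g \<in> H \<Longrightarrow> inv' g (g x) = x"
  by (drule (1) PG_perm) (rule permutes_inverses(2))
lemma PG_inv_r: "PG \<Omega> H \<Longrightarrow> g \<in> H \<Longrightarrow> g (inv' g x) = x"
  by (drule (1) PG_perm) (rule permutes_inverses(1))
lemma PG_inj: "PG \<Omega> H \<Longrightarrow> g \<in> H \<Longrightarrow> g x = g y \<Longrightarrow> x = y"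
  by (metis PG_inv_l)
lemma PG_in: "PG \<Omega> H \<Longrightarrow> g \<in> H \<Longrightarrow> g x \<in> \<Omega> \<longleftrightarrow> x \<in> \<Omega>"
  by (drule (1) PG_perm) (rule permutes_in_image)
lemma PG_out: "PG \<Omega> H \<Longrightarrow> g \<in> H \<Longrightarrow> x \<notin> \<Omega> \<Longrightarrow> g x = x"
  by (drule (1) PG_perm) (erule permutes_not_in)

lemma PG_stab: "PG \<Omega> H \<Longrightarrow> PG \<Omega> (stab H S)"
  unfolding PG_def stab_def
  by (auto simp: permutes_inv_eq)

lemma stab_sub: "stab H S \<subseteq> H" by (auto simp: stab_def)
lemma stab_stab: "stab (stab H S) T = stab H (S \<union> T)" by (auto simp: stab_def)
lemma stab_mono: "S \<subseteq> T \<Longrightarrow> stab H T \<subseteq> stab H S" by (auto simp: stab_def)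

lemma pow_period: "f ^^ a = id \<Longrightarrow> f ^^ (a * q) = id"
proof (induction q)
  case (Suc q)
  have "f ^^ (a * Suc q) = f ^^ a \<circ> f ^^ (a * q)" by (simp add: funpow_add)
  with Suc show ?case by simp
qed simp

lemma pow_mod_period: "f ^^ a = id \<Longrightarrow> f ^^ i = f ^^ (i mod a)"
proof -
  assume h: "f ^^ a = id"
  have "f ^^ i = f ^^ (i mod a + a * (i div a))" by (simp only: mod_mult_div_eq)
  also have "\<dots> = f ^^ (i mod a) \<circ> f ^^ (a * (i div a))" by (simp only: funpow_add)
  also have "\<dots> = f ^^ (i mod a)" using pow_period[OF h] by simp
  finally show ?thesis .
qed

lemma cyc_pow_mod: "cyc c D p \<Longrightarrow> c ^^ i = c ^^ (i mod p)"
  by (rule pow_mod_period) (simp add: cyc_def)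

lemma cyc_pow_in: "cyc c D p \<Longrightarrow> x \<in> D \<Longrightarrow> (c ^^ i) x \<in> D"
  by (induction i) (auto simp: cyc_def)

lemma cyc_orbit: assumes "cyc c D p" "x \<in> D" "y \<in> D" shows "\<exists>i. (c ^^ i) x = y"
proof -
  from assms obtain x0 where x0: "x0 \<in> D" "\<forall>y\<in>D. \<exists>i. (c ^^ i) x0 = y" by (auto simp: cyc_def)
  then obtain a b where a: "(c ^^ a) x0 = x" and b: "(c ^^ b) x0 = y" using assms by blast
  have cp: "c ^^ p = id" using assms by (simp add: cyc_def)
  have "(c ^^ (b + (p - 1) * a)) x = (c ^^ (b + (p - 1) * a + a)) x0"
    using a by (simp add: funpow_add)
  also have "b + (p - 1) * a + a = b + p * a"
    using assms by (cases p) (auto simp: cyc_def)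
  also have "(c ^^ (b + p * a)) x0 = y" using pow_period[OF cp, of a] b by (simp add: funpow_add)
  finally show ?thesis by blast
qed

lemma cyc_p_pos: "cyc c D p \<Longrightarrow> p > 0"
  by (auto simp: cyc_def card_gt_0_iff)

lemma cyc_pow_neq_id: assumes "cyc c D p" "0 < a" "a < p" shows "c ^^ a \<noteq> id"
proof
  assume ca: "c ^^ a = id"
  from assms obtain x0 where x0: "x0 \<in> D" "\<forall>y\<in>D. \<exists>i. (c ^^ i) x0 = y" by (auto simp: cyc_def)
  have "D \<subseteq> (\<lambda>i. (c ^^ i) x0) ` {..<a}"
  proof
    fix y assume "y \<in> D"
    then obtain i where "(c ^^ i) x0 = y" using x0 by blast
    moreover have "c ^^ i = c ^^ (i mod a)" using ca by (rule pow_mod_period)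
    ultimately show "y \<in> (\<lambda>i. (c ^^ i) x0) ` {..<a}" using assms(2) by auto
  qed
  then have "card D \<le> a" by (metis card_image_le card_lessThan finite_lessThan order_trans card_mono finite_imageI)
  then show False using assms by (auto simp: cyc_def)
qed


lemma modinv: assumes "prime (p::nat)" "0 < k" "k < p" shows "\<exists>r. (k * r) mod p = 1"
proof -
  have p1: "1 < p" using assms(1) prime_gt_1_nat by blast
  have "gcd k p dvd p" by simp
  then have "gcd k p = 1 \<or> gcd k p = p" using assms(1) prime_nat_iff by blast
  moreover have "gcd k p \<noteq> p"
  proof
    assume "gcd k p = p"
    then have "p dvd k" by (metis gcd_dvd1)
    then show False using assms(2,3) by (simp add: nat_dvd_not_less)
  qed
  ultimately have g: "gcd k p = 1" by blast
  obtain x y where "k * x = p * y + gcd k p" using bezout_nat[of k p] assms(2) by auto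
  then have kx: "k * x = 1 + p * y" using g by simp
  have "(1 + p * y) mod p = 1 mod p" by (rule mod_mult_self2)
  then have "(k * x) mod p = 1" using kx p1 by simp
  then show ?thesis by blast
qed

lemma PG_X: assumes "PG \<Omega> H" "X \<subseteq> \<Omega>" "\<forall>h\<in>H. \<forall>x\<in>\<Omega>-X. h x = x" "h \<in> H" "x \<in> X"
  shows "h x \<in> X"
proof (rule ccontr)
  assume "h x \<notin> X"
  moreover have "h x \<in> \<Omega>" using assms PG_in by blast
  ultimately have "h (h x) = h x" using assms(3,4) by blast
  then have "h x = x" using PG_inj[OF assms(1,4)] by blast
  then show False using \<open>h x \<notin> X\<close> assms(5) by simp
qed

lemma block_lemma:
  assumes PG: "PG \<Omega> H" and XO: "X \<subseteq> \<Omega>"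
    and fixX: "\<forall>h\<in>H. \<forall>x\<in>\<Omega>-X. h x = x" and fin: "finite X"
    and tr: "trans_on X H" and cH: "c \<in> H" and cy: "cyc c D p" and DX: "D \<subseteq> X"
    and pr: "prime p" and cX: "card X < 2 * p" and TX: "T \<subseteq> X"
    and T2: "2 \<le> card T" and Tp: "card T < p"
  shows "\<exists>h\<in>H. h ` T \<noteq> T \<and> h ` T \<inter> T \<noteq> {}"
proof (rule ccontr)
  assume "\<not> ?thesis"
  then have blk: "\<forall>h\<in>H. h ` T = T \<or> h ` T \<inter> T = {}" by blast
  have hX: "h \<in> H \<Longrightarrow> x \<in> X \<Longrightarrow> h x \<in> X" for h x using PG_X[OF PG XO fixX] by blast
  have blk2: "g1 ` T = g2 ` T \<or> g1 ` T \<inter> g2 ` T = {}" if g: "g1 \<in> H" "g2 \<in> H" for g1 g2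
  proof -
    let ?k = "inv' g2 \<circ> g1"
    have kH: "?k \<in> H" using g PG PG_comp PG_inv by blast
    have e: "g2 \<circ> ?k = g1" using PG_inv_r[OF PG g(2)] by (auto simp: fun_eq_iff)
    have "g1 ` T = g2 ` (?k ` T)" by (metis e image_comp)
    moreover have "inj g2" using PG_inj[OF PG g(2)] by (auto intro: injI)
    ultimately show ?thesis using blk kH
      by (metis image_Int image_empty)
  qed
  have finT: "finite T" using TX fin finite_subset by blast
  obtain t where t: "t \<in> T" using T2 by (metis card.empty all_not_in_conv not_numeral_le_zero)
  obtain x0 where x0: "x0 \<in> D" using cy by (auto simp: cyc_def)
  have x0X: "x0 \<in> X" using x0 DX by blast
  obtain h where hH: "h \<in> H" and ht: "h t = x0" using tr t TX x0X unfolding trans_on_def by blast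
  define B where "B = h ` T"
  have x0B: "x0 \<in> B" using ht t B_def by blast
  have cpH: "c ^^ i \<in> H" for i using PG_pow[OF PG cH] .
  have injH: "g \<in> H \<Longrightarrow> inj_on g A" for g A using PG_inj[OF PG] by (meson inj_onI)
  have cardB: "card ((c ^^ i) ` B) = card T" for i
  proof -
    have "(c ^^ i) ` B = (c ^^ i \<circ> h) ` T" by (simp add: B_def image_comp)
    also have "card \<dots> = card T" by (rule card_image[OF injH[OF PG_comp[OF PG cpH hH]]])
    finally show ?thesis .
  qed
  have BX: "(c ^^ i) ` B \<subseteq> X" for i using hX cpH hH TX B_def by auto
  have cp: "c ^^ p = id" using cy by (simp add: cyc_def)
  show False
  proof (cases "c ` B = B")
    case True
    have all: "(c ^^ i) ` B = B" for i
      by (induction i) (simp, metis True funpow.simps(2) image_comp)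
    have "D \<subseteq> B"
    proof
      fix y assume "y \<in> D"
      then obtain i where "(c ^^ i) x0 = y" using cyc_orbit[OF cy x0] by blast
      then show "y \<in> B" using all[of i] x0B by blast
    qed
    then have "card D \<le> card B" using BX[of 0] fin by (simp add: card_mono finite_subset)
    then show False using cardB[of 0] cy Tp by (simp add: cyc_def)
  next
    case False
    have disj: "(c ^^ i) ` B \<inter> (c ^^ j) ` B = {}" if ij: "i < j" "j < p" for i j
    proof (rule ccontr)
      assume "(c ^^ i) ` B \<inter> (c ^^ j) ` B \<noteq> {}"
      then have eq: "(c ^^ i) ` B = (c ^^ j) ` B"
        using blk2[OF PG_comp[OF PG cpH hH] PG_comp[OF PG cpH hH], of i j]
        by (simp add: B_def image_comp)
      define k where "k = j - i"
      have "(c ^^ (p - i)) ` ((c ^^ i) ` B) = (c ^^ (p - i)) ` ((c ^^ j) ` B)" using eq by simp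
      then have "(c ^^ (p - i + i)) ` B = (c ^^ (p - i + j)) ` B"
        by (simp add: funpow_add image_comp)
      moreover have "p - i + i = p" using ij by simp
      moreover have "c ^^ (p - i + j) = c ^^ k"
      proof -
        have "p - i + j = k + p" using ij k_def by simp
        then show ?thesis using cp by (simp add: funpow_add)
      qed
      ultimately have kB: "(c ^^ k) ` B = B" using cp by simp
      have allk: "(c ^^ (k * r)) ` B = B" for r
      proof (induction r)
        case (Suc r)
        have "(c ^^ (k * Suc r)) ` B = (c ^^ k) ` ((c ^^ (k * r)) ` B)"
          by (simp add: funpow_add image_comp)
        then show ?case using Suc kB by simp
      qed simp
      have "0 < k" "k < p" using ij k_def by auto
      then obtain r where r: "(k * r) mod p = 1" using modinv[OF pr] by blast
      have "c ^^ (k * r) = c" using cyc_pow_mod[OF cy, of "k * r"] r by simp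
      then show False using allk[of r] False by simp
    qed
    let ?U = "\<Union>i\<in>{..<p}. (c ^^ i) ` B"
    have "card ?U = (\<Sum>i\<in>{..<p}. card ((c ^^ i) ` B))"
    proof (rule card_UN_disjoint)
      show "\<forall>i\<in>{..<p}. finite ((c ^^ i) ` B)" using BX fin finite_subset by blast
      show "\<forall>i\<in>{..<p}. \<forall>j\<in>{..<p}. i \<noteq> j \<longrightarrow> (c ^^ i) ` B \<inter> (c ^^ j) ` B = {}"
        using disj by (metis Int_commute lessThan_iff nat_neq_iff)
    qed simp
    also have "\<dots> = p * card T" using cardB by simp
    finally have "card ?U = p * card T" .
    moreover have "card ?U \<le> card X" using BX fin by (intro card_mono) auto
    moreover have "p * card T \<ge> p * 2" using T2 by simp
    ultimately show False using cX by linarith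
  qed
qed


lemma trans_union:
  assumes "PG \<Omega> K" "trans_on A K1" "trans_on B K2" "K1 \<subseteq> K" "K2 \<subseteq> K" "z \<in> A" "z \<in> B"
  shows "trans_on (A \<union> B) K"
  unfolding trans_on_def
proof (intro ballI)
  fix x y assume x: "x \<in> A \<union> B" and y: "y \<in> A \<union> B"
  obtain g1 where g1: "g1 \<in> K" "g1 x = z"
    using x assms unfolding trans_on_def by blast
  obtain g2 where g2: "g2 \<in> K" "g2 z = y"
    using y assms unfolding trans_on_def by blast
  have "g2 \<circ> g1 \<in> K" using PG_comp[OF assms(1) g2(1) g1(1)] .
  moreover have "(g2 \<circ> g1) x = y" using g1 g2 by simp
  ultimately show "\<exists>g\<in>K. g x = y" by blast
qed

lemma trans_conj:
  assumes PG: "PG \<Omega> H" and XO: "X \<subseteq> \<Omega>" and fixX: "\<forall>h\<in>H. \<forall>x\<in>\<Omega>-X. h x = x"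
    and hH: "h \<in> H" and TX: "T \<subseteq> X" and tr: "trans_on (X - T) (stab H T)"
  shows "trans_on (X - h ` T) (stab H (h ` T))"
  unfolding trans_on_def
proof (intro ballI)
  fix u v assume u: "u \<in> X - h ` T" and v: "v \<in> X - h ` T"
  have ih: "inv' h \<in> H" using PG_inv[OF PG hH] .
  have u': "inv' h u \<in> X - T"
  proof
    show "inv' h u \<in> X" using PG_X[OF PG XO fixX ih] u by blast
    show "inv' h u \<notin> T"
    proof
      assume "inv' h u \<in> T"
      then have "h (inv' h u) \<in> h ` T" by blast
      then show False using u PG_inv_r[OF PG hH] by simp
    qed
  qed
  have v': "inv' h v \<in> X - T"
  proof
    show "inv' h v \<in> X" using PG_X[OF PG XO fixX ih] v by blast
    show "inv' h v \<notin> T"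
    proof
      assume "inv' h v \<in> T"
      then have "h (inv' h v) \<in> h ` T" by blast
      then show False using v PG_inv_r[OF PG hH] by simp
    qed
  qed
  obtain g where g: "g \<in> stab H T" "g (inv' h u) = inv' h v"
    using tr u' v' unfolding trans_on_def by blast
  have gH: "g \<in> H" using g(1) by (simp add: stab_def)
  let ?f = "h \<circ> g \<circ> inv' h"
  have fH: "?f \<in> H" using PG_comp[OF PG PG_comp[OF PG hH gH] ih] .
  have "\<forall>x\<in>h ` T. ?f x = x"
  proof
    fix x assume "x \<in> h ` T"
    then obtain t where t: "t \<in> T" "x = h t" by blast
    have "g t = t" using g(1) t(1) by (simp add: stab_def)
    then show "?f x = x" using t PG_inv_l[OF PG hH] by simp
  qed
  then have "?f \<in> stab H (h ` T)" using fH by (simp add: stab_def)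
  moreover have "?f u = v" using g(2) PG_inv_r[OF PG hH] by simp
  ultimately show "\<exists>g\<in>stab H (h ` T). g u = v" by blast
qed

lemma stab_trans_step:
  assumes PG: "PG \<Omega> H" and XO: "X \<subseteq> \<Omega>"
    and fixX: "\<forall>h\<in>H. \<forall>x\<in>\<Omega>-X. h x = x" and fin: "finite X"
    and tr: "trans_on X H" and cH: "c \<in> H" and cy: "cyc c D p" and DX: "D \<subseteq> X"
    and DneX: "D \<noteq> X" and pr: "prime p" and cX: "card X < 2 * p" and aX: "\<alpha> \<in> X"
  shows "trans_on (X - {\<alpha>}) (stab H {\<alpha>})"
proof -
  define P where "P T \<longleftrightarrow> T \<subseteq> X \<and> T \<noteq> {} \<and> 2 * card T < card X \<and> trans_on (X - T) (stab H T)" for T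
  have cD: "card D = p" using cy by (simp add: cyc_def)
  have "P (X - D)"
    unfolding P_def
  proof (intro conjI)
    show "X - D \<subseteq> X" by blast
    show "X - D \<noteq> {}" using DX DneX by blast
    have "card (X - D) = card X - p" using DX fin cD by (simp add: card_Diff_subset finite_subset)
    moreover have "p \<le> card X" using DX fin cD card_mono by blast
    ultimately show "2 * card (X - D) < card X" using cX by simp
    have XXD: "X - (X - D) = D" using DX by blast
    show "trans_on (X - (X - D)) (stab H (X - D))"
      unfolding XXD trans_on_def
    proof (intro ballI)
      fix x y assume "x \<in> D" "y \<in> D"
      then obtain i where i: "(c ^^ i) x = y" using cyc_orbit[OF cy] by blast
      have "c ^^ i \<in> stab H (X - D)"
      proof -
        have "(c ^^ i) z = z" if "z \<notin> D" for z
        proof (induction i)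
          case (Suc i)
          have "c z = z" using that cy by (simp add: cyc_def)
          then show ?case using Suc by simp
        qed simp
        then show ?thesis using PG_pow[OF PG cH] by (simp add: stab_def)
      qed
      then show "\<exists>g\<in>stab H (X - D). g x = y" using i by blast
    qed
  qed
  then obtain T where PT: "P T" and minT: "\<And>T'. P T' \<Longrightarrow> card T \<le> card T'"
    using ex_has_least_nat[of P "X - D" card] by blast
  have TX: "T \<subseteq> X" and Tne: "T \<noteq> {}" and Tc: "2 * card T < card X"
    and trT: "trans_on (X - T) (stab H T)" using PT by (auto simp: P_def)
  have finT: "finite T" using TX fin finite_subset by blast
  have hX: "h \<in> H \<Longrightarrow> x \<in> X \<Longrightarrow> h x \<in> X" for h x using PG_X[OF PG XO fixX] by blast
  have "card T = 1"
  proof (rule ccontr)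
    assume "card T \<noteq> 1"
    moreover have "card T \<noteq> 0" using finT Tne by simp
    ultimately have T2: "2 \<le> card T" by linarith
    have Tp: "card T < p" using Tc cX by linarith
    obtain h where hH: "h \<in> H" and hT: "h ` T \<noteq> T" and hTT: "h ` T \<inter> T \<noteq> {}"
      using block_lemma[OF PG XO fixX fin tr cH cy DX pr cX TX T2 Tp] by blast
    define T' where "T' = T \<inter> h ` T"
    have inj: "inj_on h T" using PG_inj[OF PG hH] by (meson inj_onI)
    have chT: "card (h ` T) = card T" using card_image[OF inj] .
    have hTX: "h ` T \<subseteq> X" using hX hH TX by blast
    have "\<not> T \<subseteq> h ` T"
    proof
      assume "T \<subseteq> h ` T"
      then have "T = h ` T" using chT finT by (metis card_subset_eq finite_imageI)
      then show False using hT by simp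
    qed
    then have "T' \<subset> T" unfolding T'_def by blast
    then have cT': "card T' < card T" using finT by (simp add: psubset_card_mono)
    have "P T'"
      unfolding P_def
    proof (intro conjI)
      show "T' \<subseteq> X" using TX T'_def by blast
      show "T' \<noteq> {}" using hTT T'_def by blast
      show "2 * card T' < card X" using cT' Tc by linarith
      have tr2: "trans_on (X - h ` T) (stab H (h ` T))"
        using trans_conj[OF PG XO fixX hH TX trT] .
      have "card (T \<union> h ` T) \<le> card T + card (h ` T)" by (rule card_Un_le)
      then have "card (T \<union> h ` T) < card X" using chT Tc by linarith
      moreover have "X \<subseteq> T \<union> h ` T \<Longrightarrow> card X \<le> card (T \<union> h ` T)"
        using finT by (intro card_mono) auto
      ultimately have "\<not> X \<subseteq> T \<union> h ` T" by linarith
      then obtain z where z: "z \<in> X" "z \<notin> T" "z \<notin> h ` T" by blast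
      have "trans_on ((X - T) \<union> (X - h ` T)) (stab H T')"
      proof (rule trans_union[OF PG_stab[OF PG] trT tr2])
        show "stab H T \<subseteq> stab H T'" by (rule stab_mono) (auto simp: T'_def)
        show "stab H (h ` T) \<subseteq> stab H T'" by (rule stab_mono) (auto simp: T'_def)
        show "z \<in> X - T" using z by blast
        show "z \<in> X - h ` T" using z by blast
      qed
      moreover have "(X - T) \<union> (X - h ` T) = X - T'" by (auto simp: T'_def)
      ultimately show "trans_on (X - T') (stab H T')" by simp
    qed
    then have "card T \<le> card T'" by (rule minT)
    then show False using cT' by simp
  qed
  then obtain a0 where Ta0: "T = {a0}" using card_1_singletonE by blast
  have a0X: "a0 \<in> X" using TX Ta0 by blast
  obtain h where hH: "h \<in> H" and ha: "h a0 = \<alpha>" using tr a0X aX unfolding trans_on_def by blast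
  have "trans_on (X - h ` T) (stab H (h ` T))" using trans_conj[OF PG XO fixX hH TX trT] .
  then show ?thesis using Ta0 ha by simp
qed


lemma chain:
  assumes PG: "PG \<Omega> G" and fin: "finite \<Omega>" and tr: "trans_on \<Omega> G" and cG: "c \<in> G"
    and cy: "cyc c D p" and DO: "D \<subseteq> \<Omega>" and pr: "prime p" and cO: "card \<Omega> < 2 * p"
  shows "S \<subseteq> \<Omega> - D \<Longrightarrow> trans_on (\<Omega> - S) (stab G S)"
proof -
  assume SG: "S \<subseteq> \<Omega> - D"
  have "finite S" using SG fin finite_subset by blast
  then show ?thesis using SG
  proof (induction S rule: finite_induct)
    case empty
    then show ?case using tr by (simp add: stab_def)
  next
    case (insert \<alpha> S)
    have IH: "trans_on (\<Omega> - S) (stab G S)" using insert by blast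
    have "trans_on (\<Omega> - S - {\<alpha>}) (stab (stab G S) {\<alpha>})"
    proof (rule stab_trans_step[OF PG_stab[OF PG] _ _ _ IH])
      show "\<Omega> - S \<subseteq> \<Omega>" by blast
      show "\<forall>h\<in>stab G S. \<forall>x\<in>\<Omega> - (\<Omega> - S). h x = x" by (auto simp: stab_def)
      show "finite (\<Omega> - S)" using fin by blast
      show "c \<in> stab G S" using cG cy insert.prems by (auto simp: stab_def cyc_def)
      show "cyc c D p" by fact
      show "D \<subseteq> \<Omega> - S" using DO insert.prems by blast
      show "D \<noteq> \<Omega> - S" using insert.prems insert.hyps by blast
      show "prime p" by fact
      show "card (\<Omega> - S) < 2 * p" using cO fin by (meson Diff_subset card_mono le_less_trans)
      show "\<alpha> \<in> \<Omega> - S" using insert.prems insert.hyps by blast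
    qed
    moreover have "\<Omega> - S - {\<alpha>} = \<Omega> - insert \<alpha> S" by blast
    moreover have "stab (stab G S) {\<alpha>} = stab G (insert \<alpha> S)" by (auto simp: stab_def)
    ultimately show ?case by simp
  qed
qed

lemma swap_exists:
  assumes PG: "PG \<Omega> G" and chain: "\<And>S. S \<subseteq> \<Gamma> \<Longrightarrow> trans_on (\<Omega> - S) (stab G S)"
    and GO: "\<Gamma> \<subseteq> \<Omega>" and g1: "\<gamma>1 \<in> \<Gamma>" and g2: "\<gamma>2 \<in> \<Gamma>" and ne: "\<gamma>1 \<noteq> \<gamma>2"
  shows "\<exists>g\<in>G. g \<gamma>1 = \<gamma>2 \<and> g \<gamma>2 = \<gamma>1 \<and> (\<forall>\<gamma>\<in>\<Gamma>-{\<gamma>1,\<gamma>2}. g \<gamma> = \<gamma>)"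
proof -
  define S where "S = \<Gamma> - {\<gamma>1, \<gamma>2}"
  have "trans_on (\<Omega> - S) (stab G S)" by (rule chain) (auto simp: S_def)
  moreover have "\<gamma>1 \<in> \<Omega> - S" "\<gamma>2 \<in> \<Omega> - S" using g1 g2 GO S_def by auto
  ultimately obtain f1 where f1: "f1 \<in> stab G S" "f1 \<gamma>1 = \<gamma>2"
    unfolding trans_on_def by blast
  have f1G: "f1 \<in> G" using f1 by (simp add: stab_def)
  define y where "y = f1 \<gamma>2"
  have yS: "y \<notin> S"
  proof
    assume "y \<in> S"
    then have "f1 y = y" using f1 by (simp add: stab_def)
    then have "\<gamma>2 = y" using PG_inj[OF PG f1G] y_def by metis
    then show False using \<open>y \<in> S\<close> S_def by blast
  qed
  have yne: "y \<noteq> \<gamma>2"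
  proof
    assume "y = \<gamma>2"
    then have "f1 \<gamma>2 = f1 \<gamma>1" using y_def f1 by simp
    then show False using PG_inj[OF PG f1G] ne by metis
  qed
  have yO: "y \<in> \<Omega>" using PG_in[OF PG f1G] g2 GO y_def by blast
  have "insert \<gamma>2 S \<subseteq> \<Gamma>" using g2 S_def by auto
  then have "trans_on (\<Omega> - insert \<gamma>2 S) (stab G (insert \<gamma>2 S))" by (rule chain)
  moreover have "y \<in> \<Omega> - insert \<gamma>2 S" using yS yne yO by blast
  moreover have "\<gamma>1 \<in> \<Omega> - insert \<gamma>2 S" using g1 GO ne S_def by auto
  ultimately obtain f2 where f2: "f2 \<in> stab G (insert \<gamma>2 S)" "f2 y = \<gamma>1"
    unfolding trans_on_def by blast
  have f2G: "f2 \<in> G" using f2 by (simp add: stab_def)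
  have "f2 \<circ> f1 \<in> G" using PG_comp[OF PG f2G f1G] .
  moreover have "(f2 \<circ> f1) \<gamma>1 = \<gamma>2" using f1 f2 by (simp add: stab_def)
  moreover have "(f2 \<circ> f1) \<gamma>2 = \<gamma>1" using f2 y_def by simp
  moreover have "\<forall>\<gamma>\<in>\<Gamma>-{\<gamma>1,\<gamma>2}. (f2 \<circ> f1) \<gamma> = \<gamma>" using f1 f2 S_def by (simp add: stab_def)
  ultimately show ?thesis by blast
qed

lemma three_trans:
  assumes PG: "PG \<Omega> G" and chain: "\<And>S. S \<subseteq> \<Gamma> \<Longrightarrow> trans_on (\<Omega> - S) (stab G S)"
    and GO: "\<Gamma> \<subseteq> \<Omega>" and abc: "a \<in> \<Gamma>" "b \<in> \<Gamma>" "c \<in> \<Gamma>" "a \<noteq> b" "a \<noteq> c" "b \<noteq> c"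
    and xyz: "x \<in> \<Omega>" "y \<in> \<Omega>" "z \<in> \<Omega>" "x \<noteq> y" "x \<noteq> z" "y \<noteq> z"
  shows "\<exists>f\<in>G. f x = a \<and> f y = b \<and> f z = c"
proof -
  have t0: "trans_on \<Omega> G" using chain[of "{}"] by (simp add: stab_def)
  have aO: "a \<in> \<Omega>" using abc GO by blast
  obtain g1 where g1: "g1 \<in> G" "g1 x = a" using t0 xyz(1) aO unfolding trans_on_def by blast
  define y1 z1 where "y1 = g1 y" and "z1 = g1 z"
  have i1: "g1 u = g1 v \<Longrightarrow> u = v" for u v using PG_inj[OF PG g1(1)] by blast
  have y1: "y1 \<in> \<Omega>" "y1 \<noteq> a"
    using PG_in[OF PG g1(1), of y] xyz(2) apply (simp add: y1_def)
    using i1[of y x] xyz(4) g1(2) y1_def by metis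
  have z1: "z1 \<in> \<Omega>" "z1 \<noteq> a" "z1 \<noteq> y1"
    using PG_in[OF PG g1(1), of z] xyz(3) apply (simp add: z1_def)
    using i1[of z x] xyz(5) g1(2) z1_def apply metis
    using i1[of z y] xyz(6) y1_def z1_def by metis
  have "trans_on (\<Omega> - {a}) (stab G {a})" using chain[of "{a}"] abc(1) by simp
  moreover have "y1 \<in> \<Omega> - {a}" "b \<in> \<Omega> - {a}" using y1 abc GO by auto
  ultimately obtain g2 where g2: "g2 \<in> stab G {a}" "g2 y1 = b"
    unfolding trans_on_def by blast
  have g2G: "g2 \<in> G" using g2 by (simp add: stab_def)
  have g2a: "g2 a = a" using g2 by (simp add: stab_def)
  define z2 where "z2 = g2 z1"
  have i2: "g2 u = g2 v \<Longrightarrow> u = v" for u v using PG_inj[OF PG g2G] by blast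
  have z2: "z2 \<in> \<Omega>" "z2 \<noteq> a" "z2 \<noteq> b"
    using PG_in[OF PG g2G, of z1] z1(1) apply (simp add: z2_def)
    using i2[of z1 a] z1(2) g2a z2_def apply metis
    using i2[of z1 y1] z1(3) g2(2) z2_def by metis
  have "trans_on (\<Omega> - {a, b}) (stab G {a, b})" using chain[of "{a, b}"] abc(1,2) by simp
  moreover have "z2 \<in> \<Omega> - {a, b}" "c \<in> \<Omega> - {a, b}" using z2 abc GO by auto
  ultimately obtain g3 where g3: "g3 \<in> stab G {a, b}" "g3 z2 = c"
    unfolding trans_on_def by blast
  have g3G: "g3 \<in> G" using g3 by (simp add: stab_def)
  have g3ab: "g3 a = a" "g3 b = b" using g3 by (auto simp: stab_def)
  have "g3 \<circ> g2 \<circ> g1 \<in> G" using PG_comp[OF PG PG_comp[OF PG g3G g2G] g1(1)] .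
  moreover have "(g3 \<circ> g2 \<circ> g1) x = a" using g1 g2a g3ab by simp
  moreover have "(g3 \<circ> g2 \<circ> g1) y = b" using y1_def g2 g3ab by simp
  moreover have "(g3 \<circ> g2 \<circ> g1) z = c" using z1_def z2_def g3 by simp
  ultimately show ?thesis by blast
qed


lemma conj_pow:
  assumes "k permutes \<Omega>"
  shows "(inv' k \<circ> f \<circ> k) ^^ r = inv' k \<circ> f ^^ r \<circ> k"
proof (induction r)
  case 0
  then show ?case using permutes_inv_o(2)[OF assms] by simp
next
  case (Suc r)
  have "(inv' k \<circ> f \<circ> k) ^^ Suc r = (inv' k \<circ> f \<circ> k) \<circ> (inv' k \<circ> f ^^ r \<circ> k)"
    by (simp only: funpow.simps(2) Suc.IH)
  also have "\<dots> = inv' k \<circ> f \<circ> (k \<circ> inv' k) \<circ> f ^^ r \<circ> k" by (simp add: comp_assoc)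
  also have "\<dots> = inv' k \<circ> f ^^ Suc r \<circ> k"
    by (simp add: fun_eq_iff permutes_inverses[OF assms])
  finally show ?case .
qed

lemma pow_inv_period: "f ^^ p = id \<Longrightarrow> 0 < p \<Longrightarrow> f ^^ ((p - 1) * a) \<circ> f ^^ a = id"
proof -
  assume h: "f ^^ p = id" and p0: "0 < p"
  show ?thesis
  proof (cases p)
    case 0
    then show ?thesis using p0 by simp
  next
    case (Suc q)
    then have "(p - 1) * a + a = p * a" by simp
    then have "f ^^ ((p - 1) * a) \<circ> f ^^ a = f ^^ (p * a)" by (metis funpow_add)
    then show ?thesis using pow_period[OF h] by simp
  qed
qed

lemma mod_diff_zero:
  fixes i i' p :: nat
  assumes "i < p" "i' < p" "(p - i' + i) mod p = 0" shows "i = i'"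
proof (cases "i' \<le> i")
  case True
  then have "p - i' + i = (i - i') + p * 1" using assms by simp
  then have "(p - i' + i) mod p = (i - i') mod p" by (metis mod_mult_self1 mult.commute)
  then have "(i - i') mod p = 0" using assms by simp
  then have "i - i' = 0" using assms by simp
  then show ?thesis using True by simp
next
  case False
  then have "p - i' + i < p" "0 < p - i' + i" using assms by auto
  then have "(p - i' + i) mod p = p - i' + i" by simp
  then show ?thesis using assms \<open>0 < p - i' + i\<close> by simp
qed

lemma sylow_conj:
  assumes PG: "PG \<Omega> K" and finK: "finite K" and cK: "c \<in> K" and dK: "d \<in> K"
    and cp: "c ^^ p = id" and dp: "d ^^ p = id"
    and cne: "\<And>a. 0 < a \<Longrightarrow> a < p \<Longrightarrow> c ^^ a \<noteq> id"
    and pr: "prime p" and ndvd: "\<not> p ^ 2 dvd card K"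
  shows "\<exists>k\<in>K. \<exists>e. inv' k \<circ> d \<circ> k = c ^^ e"
proof (rule ccontr)
  assume "\<not> ?thesis"
  then have no: "\<And>k e. k \<in> K \<Longrightarrow> inv' k \<circ> d \<circ> k \<noteq> c ^^ e" by blast
  have p1: "1 < p" using pr prime_gt_1_nat by blast
  then have p0: "0 < p" by simp
  define Orb where "Orb k = {d ^^ i \<circ> k \<circ> c ^^ j | i j. True}" for k
  define F where "F k = (\<lambda>(i, j). d ^^ i \<circ> k \<circ> c ^^ j)" for k
  have OrbF: "Orb k = F k ` ({..<p} \<times> {..<p})" for k
  proof
    show "Orb k \<subseteq> F k ` ({..<p} \<times> {..<p})"
    proof
      fix x assume "x \<in> Orb k"
      then obtain i j where x: "x = d ^^ i \<circ> k \<circ> c ^^ j" unfolding Orb_def by blast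
      have "x = F k (i mod p, j mod p)"
        unfolding x F_def using pow_mod_period[OF cp, of j] pow_mod_period[OF dp, of i] by simp
      moreover have "(i mod p, j mod p) \<in> {..<p} \<times> {..<p}" using p1 by simp
      ultimately show "x \<in> F k ` ({..<p} \<times> {..<p})" by blast
    qed
    show "F k ` ({..<p} \<times> {..<p}) \<subseteq> Orb k" unfolding Orb_def F_def by auto
  qed
  have OK: "Orb k \<subseteq> K" if "k \<in> K" for k
    unfolding Orb_def using PG_comp[OF PG] PG_pow[OF PG] that cK dK by blast
  have kO: "k \<in> Orb k" for k
  proof -
    have "k = d ^^ 0 \<circ> k \<circ> c ^^ 0" by simp
    then show ?thesis unfolding Orb_def by blast
  qed
  have Otrans: "Orb k' \<subseteq> Orb k" if kin: "k' \<in> Orb k" for k k'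
  proof
    fix x assume "x \<in> Orb k'"
    then obtain i j where x: "x = d ^^ i \<circ> k' \<circ> c ^^ j" unfolding Orb_def by blast
    obtain a b where k': "k' = d ^^ a \<circ> k \<circ> c ^^ b" using kin unfolding Orb_def by blast
    have "x = d ^^ (i + a) \<circ> k \<circ> c ^^ (b + j)" unfolding x k' by (simp add: funpow_add comp_assoc)
    then show "x \<in> Orb k" unfolding Orb_def by blast
  qed
  have Osym: "k \<in> Orb k'" if kin: "k' \<in> Orb k" for k k'
  proof -
    obtain a b where k': "k' = d ^^ a \<circ> k \<circ> c ^^ b" using kin unfolding Orb_def by blast
    have "d ^^ ((p - 1) * a) \<circ> k' \<circ> c ^^ ((p - 1) * b)
          = (d ^^ ((p - 1) * a) \<circ> d ^^ a) \<circ> k \<circ> (c ^^ b \<circ> c ^^ ((p - 1) * b))"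
      unfolding k' by (simp add: comp_assoc)
    also have "c ^^ b \<circ> c ^^ ((p - 1) * b) = id"
      using pow_inv_period[OF cp p0, of b] by (simp add: funpow_add[symmetric] add.commute)
    also have "d ^^ ((p - 1) * a) \<circ> d ^^ a = id" using pow_inv_period[OF dp p0] .
    finally have "d ^^ ((p - 1) * a) \<circ> k' \<circ> c ^^ ((p - 1) * b) = id \<circ> k \<circ> id" .
    then have "k = d ^^ ((p - 1) * a) \<circ> k' \<circ> c ^^ ((p - 1) * b)" by (simp only: id_comp comp_id)
    then show ?thesis unfolding Orb_def by blast
  qed
  have Oeq: "Orb k' = Orb k" if "k' \<in> Orb k" for k k'
    using Otrans[OF that] Otrans[OF Osym[OF that]] by blast
  have injF: "inj_on (F k) ({..<p} \<times> {..<p})" if kK: "k \<in> K" for k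
  proof (rule inj_onI)
    fix u v assume u: "u \<in> {..<p} \<times> {..<p}" and v: "v \<in> {..<p} \<times> {..<p}" and e: "F k u = F k v"
    obtain i j where uij: "u = (i, j)" by (cases u)
    obtain i' j' where vij: "v = (i', j')" by (cases v)
    have ij: "i < p" "j < p" "i' < p" "j' < p" using u v uij vij by auto
    have eq: "d ^^ i \<circ> k \<circ> c ^^ j = d ^^ i' \<circ> k \<circ> c ^^ j'" using e uij vij F_def by simp
    have kp: "k permutes \<Omega>" using PG_perm[OF PG kK] .
    define A where "A = (p - i' + i) mod p"
    define B where "B = (j' + (p - j)) mod p"
    have "d ^^ (p - i') \<circ> (d ^^ i \<circ> k \<circ> c ^^ j) \<circ> c ^^ (p - j)
        = d ^^ (p - i') \<circ> (d ^^ i' \<circ> k \<circ> c ^^ j') \<circ> c ^^ (p - j)" using eq by simp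
    then have "d ^^ (p - i' + i) \<circ> k \<circ> (c ^^ (j + (p - j)))
        = (d ^^ (p - i' + i')) \<circ> k \<circ> (c ^^ (j' + (p - j)))"
      by (simp add: funpow_add comp_assoc)
    moreover have "j + (p - j) = p" "p - i' + i' = p" using ij by auto
    ultimately have "d ^^ (p - i' + i) \<circ> k = k \<circ> c ^^ (j' + (p - j))" using cp dp by simp
    then have AB: "d ^^ A \<circ> k = k \<circ> c ^^ B"
      unfolding A_def B_def using pow_mod_period[OF cp] pow_mod_period[OF dp] by metis
    then have AB': "inv' k \<circ> d ^^ A \<circ> k = c ^^ B"
      using permutes_inv_o(2)[OF kp] by (metis comp_assoc fun.map_id)
    show "u = v"
    proof (cases "A = 0")
      case True
      then have "c ^^ B = id" using AB' permutes_inv_o(2)[OF kp] by simp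
      moreover have "B < p" using B_def p1 by simp
      ultimately have "B = 0" using cne by (meson neq0_conv)
      have "i = i'" using mod_diff_zero[of i p i'] True A_def ij by simp
      moreover have "j' = j" using mod_diff_zero[of j' p j] \<open>B = 0\<close> B_def ij by (simp add: add.commute)
      ultimately show ?thesis using uij vij by simp
    next
      case False
      have "A < p" using A_def p1 by simp
      then obtain r where r: "(A * r) mod p = 1" using modinv[OF pr] False by blast
      have "(inv' k \<circ> d ^^ A \<circ> k) ^^ r = inv' k \<circ> (d ^^ A) ^^ r \<circ> k" using conj_pow[OF kp] .
      also have "(d ^^ A) ^^ r = d" using pow_mod_period[OF dp, of "A * r"] r by (simp add: funpow_mult)
      finally have E: "(inv' k \<circ> d ^^ A \<circ> k) ^^ r = inv' k \<circ> d \<circ> k" .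
      then have "(c ^^ B) ^^ r = inv' k \<circ> d \<circ> k" by (simp only: AB')
      then have "inv' k \<circ> d \<circ> k = c ^^ (B * r)" by (simp only: funpow_mult)
      then show ?thesis using no[OF kK] by blast
    qed
  qed
  have cardO: "card (Orb k) = p ^ 2" if "k \<in> K" for k
    using card_image[OF injF[OF that]] OrbF by (simp add: power2_eq_square)
  have UK: "\<Union> (Orb ` K) = K" using OK kO by blast
  have "p ^ 2 * card (Orb ` K) = card (\<Union> (Orb ` K))"
  proof (rule card_partition)
    show "finite (Orb ` K)" using finK by simp
    show "finite (\<Union> (Orb ` K))" using UK finK by simp
    show "\<And>c. c \<in> Orb ` K \<Longrightarrow> card c = p ^ 2" using cardO by blast
    show "\<And>c1 c2. c1 \<in> Orb ` K \<Longrightarrow> c2 \<in> Orb ` K \<Longrightarrow> c1 \<noteq> c2 \<Longrightarrow> c1 \<inter> c2 = {}"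
    proof -
      fix c1 c2 assume c1: "c1 \<in> Orb ` K" and c2: "c2 \<in> Orb ` K" and ne: "c1 \<noteq> c2"
      show "c1 \<inter> c2 = {}"
      proof (rule ccontr)
        assume "c1 \<inter> c2 \<noteq> {}"
        then obtain x where "x \<in> c1" "x \<in> c2" by blast
        then show False using c1 c2 ne Oeq by (metis imageE)
      qed
    qed
  qed
  then have "p ^ 2 dvd card K" using UK by (metis dvd_triv_left)
  then show False using ndvd by simp
qed


lemma conj_pow_gen:
  assumes "h \<circ> h' = id" "h' \<circ> h = id"
  shows "(h' \<circ> f \<circ> h) ^^ r = h' \<circ> f ^^ r \<circ> h"
proof (induction r)
  case 0
  then show ?case using assms(2) by simp
next
  case (Suc r)
  have hh: "h (h' y) = y" for y using assms(1) by (simp add: fun_eq_iff)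
  have "(h' \<circ> f \<circ> h) ^^ Suc r = (h' \<circ> f \<circ> h) \<circ> (h' \<circ> f ^^ r \<circ> h)"
    by (simp only: funpow.simps(2) Suc.IH)
  also have "\<dots> = h' \<circ> f ^^ Suc r \<circ> h" by (simp add: fun_eq_iff hh)
  finally show ?case .
qed

lemma norm_pow:
  assumes "\<And>x. h (c x) = (c ^^ e) (h x)"
  shows "h ((c ^^ j) x) = (c ^^ (e * j)) (h x)"
proof (induction j)
  case (Suc j)
  have "h ((c ^^ Suc j) x) = (c ^^ e) (h ((c ^^ j) x))" using assms by simp
  also have "\<dots> = (c ^^ e) ((c ^^ (e * j)) (h x))" using Suc by simp
  also have "\<dots> = (c ^^ (e * Suc j)) (h x)" by (simp add: funpow_add)
  finally show ?case .
qed simp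

lemma norm_inv:
  assumes "h permutes \<Omega>" "\<And>y. h (a y) = b (h y)"
  shows "inv' h (b z) = a (inv' h z)"
proof -
  have "h (a (inv' h z)) = b z" using assms(2)[of "inv' h z"] permutes_inverses(1)[OF assms(1)] by simp
  then show ?thesis using permutes_inverses(2)[OF assms(1)] by metis
qed

lemma norm_exists:
  assumes PG: "PG \<Omega> G" and finG: "finite G" and cG: "c \<in> G" and cy: "cyc c D p"
    and DO: "D \<subseteq> \<Omega>" and pr: "prime p"
    and ndvd: "\<not> p ^ 2 dvd card (stab G (\<Omega> - D))"
    and chain: "\<And>S. S \<subseteq> \<Omega> - D \<Longrightarrow> trans_on (\<Omega> - S) (stab G S)"
    and a: "a \<in> \<Omega> - D" and b: "b \<in> \<Omega> - D" and ab: "a \<noteq> b"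
  shows "\<exists>h\<in>G. \<exists>e. (\<forall>x. h (c x) = (c ^^ e) (h x)) \<and> (\<forall>\<gamma>\<in>\<Omega>-D. h \<gamma> = transpose a b \<gamma>)"
proof -
  define \<Gamma> where "\<Gamma> = \<Omega> - D"
  obtain g where gG: "g \<in> G" and gab: "g a = b" "g b = a" and gfix: "\<forall>\<gamma>\<in>\<Gamma>-{a,b}. g \<gamma> = \<gamma>"
    using swap_exists[OF PG chain _ a b ab] \<Gamma>_def by blast
  have gt: "g \<gamma> = transpose a b \<gamma>" if "\<gamma> \<in> \<Gamma>" for \<gamma>
    using that gab gfix by (cases "\<gamma> = a"; cases "\<gamma> = b") auto
  have tG: "transpose a b \<gamma> \<in> \<Gamma>" if "\<gamma> \<in> \<Gamma>" for \<gamma>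
    using that a b \<Gamma>_def by (cases "\<gamma> = a"; cases "\<gamma> = b") auto
  have ginv: "inv' g \<gamma> = transpose a b \<gamma>" if "\<gamma> \<in> \<Gamma>" for \<gamma>
  proof -
    have "g (transpose a b \<gamma>) = \<gamma>" using gt[OF tG[OF that]] by simp
    then show ?thesis using PG_inv_l[OF PG gG] by metis
  qed
  have cfix: "c x = x" if "x \<notin> D" for x using that cy by (simp add: cyc_def)
  define d where "d = g \<circ> c \<circ> inv' g"
  have gp: "g permutes \<Omega>" using PG_perm[OF PG gG] .
  have dG: "d \<in> G" unfolding d_def using PG_comp[OF PG PG_comp[OF PG gG cG] PG_inv[OF PG gG]] .
  have dK: "d \<in> stab G \<Gamma>"
  proof -
    have "d \<gamma> = \<gamma>" if "\<gamma> \<in> \<Gamma>" for \<gamma>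
    proof -
      have "transpose a b \<gamma> \<notin> D" using tG[OF that] \<Gamma>_def by blast
      then have "d \<gamma> = g (transpose a b \<gamma>)" unfolding d_def using ginv[OF that] cfix by simp
      also have "\<dots> = \<gamma>" using gt[OF tG[OF that]] by simp
      finally show ?thesis .
    qed
    then show ?thesis using dG by (simp add: stab_def)
  qed
  have cK: "c \<in> stab G \<Gamma>" using cG cfix \<Gamma>_def by (simp add: stab_def)
  have cp: "c ^^ p = id" using cy by (simp add: cyc_def)
  have dp: "d ^^ p = id"
  proof -
    have "d ^^ p = g \<circ> c ^^ p \<circ> inv' g"
      unfolding d_def by (rule conj_pow_gen) (simp_all add: permutes_inv_o[OF gp])
    then show ?thesis using cp permutes_inv_o[OF gp] by simp
  qed
  have finK: "finite (stab G \<Gamma>)" using finG stab_sub finite_subset by blast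
  obtain k e where kK: "k \<in> stab G \<Gamma>" and ke: "inv' k \<circ> d \<circ> k = c ^^ e"
    using sylow_conj[OF PG_stab[OF PG] finK cK dK cp dp cyc_pow_neq_id[OF cy] pr] ndvd \<Gamma>_def by blast
  have kG: "k \<in> G" using kK stab_sub by blast
  define h where "h = inv' k \<circ> g"
  have hG: "h \<in> G" unfolding h_def using PG_comp[OF PG PG_inv[OF PG kG] gG] .
  have "h (c x) = (c ^^ e) (h x)" for x
  proof -
    have "(c ^^ e) (h x) = inv' k (d (k (inv' k (g x))))" using ke h_def by (metis comp_apply)
    also have "\<dots> = inv' k (d (g x))" using PG_inv_r[OF PG kG] by simp
    also have "\<dots> = inv' k (g (c x))" unfolding d_def using PG_inv_l[OF PG gG] by simp
    finally show ?thesis unfolding h_def by simp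
  qed
  moreover have "h \<gamma> = transpose a b \<gamma>" if "\<gamma> \<in> \<Omega> - D" for \<gamma>
  proof -
    have tg: "transpose a b \<gamma> \<in> \<Gamma>" using tG that \<Gamma>_def by blast
    have "k (transpose a b \<gamma>) = transpose a b \<gamma>" using kK tg by (simp add: stab_def)
    then have "inv' k (transpose a b \<gamma>) = transpose a b \<gamma>" using PG_inv_l[OF PG kG] by metis
    then show ?thesis unfolding h_def using gt that \<Gamma>_def by simp
  qed
  ultimately show ?thesis using hG by blast
qed


lemma rho_eval:
  assumes "a \<noteq> b" "a \<noteq> c" "b \<noteq> c"
  shows "cycle_of_list [a, b, c] a = b" "cycle_of_list [a, b, c] b = c" "cycle_of_list [a, b, c] c = a"
    "y \<notin> {a, b, c} \<Longrightarrow> cycle_of_list [a, b, c] y = y"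
  using assms by (auto simp: transpose_def)

lemma three_cycle_exists:
  assumes PG: "PG \<Omega> G" and finG: "finite G" and cG: "c \<in> G" and cy: "cyc c D p"
    and DO: "D \<subseteq> \<Omega>" and pr: "prime p" and p3: "3 < p"
    and ndvd: "\<not> p ^ 2 dvd card (stab G (\<Omega> - D))"
    and chain: "\<And>S. S \<subseteq> \<Omega> - D \<Longrightarrow> trans_on (\<Omega> - S) (stab G S)"
    and g1: "\<gamma>1 \<in> \<Omega> - D" and g2: "\<gamma>2 \<in> \<Omega> - D" and g3: "\<gamma>3 \<in> \<Omega> - D"
    and d12: "\<gamma>1 \<noteq> \<gamma>2" and d13: "\<gamma>1 \<noteq> \<gamma>3" and d23: "\<gamma>2 \<noteq> \<gamma>3"
  shows "\<exists>a b c'. a \<in> \<Omega> - D \<and> b \<in> \<Omega> - D \<and> c' \<in> \<Omega> - D \<and> a \<noteq> b \<and> a \<noteq> c' \<and> b \<noteq> c'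
           \<and> cycle_of_list [a, b, c'] \<in> G"
proof -
  define \<Gamma> where "\<Gamma> = \<Omega> - D"
  obtain h1 e1 where h1G: "h1 \<in> G" and N1: "\<And>x. h1 (c x) = (c ^^ e1) (h1 x)"
    and t1: "\<And>\<gamma>. \<gamma> \<in> \<Gamma> \<Longrightarrow> h1 \<gamma> = transpose \<gamma>1 \<gamma>2 \<gamma>"
    using norm_exists[OF PG finG cG cy DO pr ndvd chain g1 g2 d12] \<Gamma>_def by blast
  obtain h2 e2 where h2G: "h2 \<in> G" and N2: "\<And>x. h2 (c x) = (c ^^ e2) (h2 x)"
    and t2: "\<And>\<gamma>. \<gamma> \<in> \<Gamma> \<Longrightarrow> h2 \<gamma> = transpose \<gamma>2 \<gamma>3 \<gamma>"
    using norm_exists[OF PG finG cG cy DO pr ndvd chain g2 g3 d23] \<Gamma>_def by blast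
  have h1p: "h1 permutes \<Omega>" using PG_perm[OF PG h1G] .
  have h2p: "h2 permutes \<Omega>" using PG_perm[OF PG h2G] .
  have gG: "\<gamma>1 \<in> \<Gamma>" "\<gamma>2 \<in> \<Gamma>" "\<gamma>3 \<in> \<Gamma>" using g1 g2 g3 \<Gamma>_def by auto
  have tr1: "transpose \<gamma>1 \<gamma>2 \<gamma> \<in> \<Gamma>" if "\<gamma> \<in> \<Gamma>" for \<gamma>
    using that gG by (auto simp: transpose_def)
  have tr2: "transpose \<gamma>2 \<gamma>3 \<gamma> \<in> \<Gamma>" if "\<gamma> \<in> \<Gamma>" for \<gamma>
    using that gG by (auto simp: transpose_def)
  have i1: "inv' h1 \<gamma> = transpose \<gamma>1 \<gamma>2 \<gamma>" if "\<gamma> \<in> \<Gamma>" for \<gamma>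
  proof -
    have "h1 (transpose \<gamma>1 \<gamma>2 \<gamma>) = \<gamma>" using t1[OF tr1[OF that]] by simp
    then show ?thesis using permutes_inverses(2)[OF h1p] by metis
  qed
  have i2: "inv' h2 \<gamma> = transpose \<gamma>2 \<gamma>3 \<gamma>" if "\<gamma> \<in> \<Gamma>" for \<gamma>
  proof -
    have "h2 (transpose \<gamma>2 \<gamma>3 \<gamma>) = \<gamma>" using t2[OF tr2[OF that]] by simp
    then show ?thesis using permutes_inverses(2)[OF h2p] by metis
  qed
  define w where "w = inv' h1 \<circ> inv' h2 \<circ> h1 \<circ> h2"
  have wG: "w \<in> G" unfolding w_def
    using PG_comp[OF PG PG_comp[OF PG PG_comp[OF PG PG_inv[OF PG h1G] PG_inv[OF PG h2G]] h1G] h2G] .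
  have wc: "w (c x) = c (w x)" for x
  proof -
    have "w (c x) = inv' h1 (inv' h2 (h1 ((c ^^ e2) (h2 x))))" unfolding w_def using N2 by simp
    also have "\<dots> = inv' h1 (inv' h2 ((c ^^ (e2 * e1)) (h1 (h2 x))))"
      using norm_pow[where h=h1 and c=c and e=e1, OF N1, of e2] by (simp add: mult.commute)
    also have "\<dots> = inv' h1 ((c ^^ e1) (inv' h2 (h1 (h2 x))))"
      using norm_inv[OF h2p, of "c ^^ e1" "c ^^ (e2 * e1)"] norm_pow[where h=h2 and c=c and e=e2, OF N2, of e1] by metis
    also have "\<dots> = c (inv' h1 (inv' h2 (h1 (h2 x))))"
      using norm_inv[OF h1p, of c "c ^^ e1"] N1 by metis
    finally show ?thesis unfolding w_def by simp
  qed
  define \<rho> where "\<rho> = cycle_of_list [\<gamma>1, \<gamma>3, \<gamma>2]"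
  have rho: "\<rho> \<gamma>1 = \<gamma>3" "\<rho> \<gamma>3 = \<gamma>2" "\<rho> \<gamma>2 = \<gamma>1" "\<And>y. y \<notin> {\<gamma>1, \<gamma>3, \<gamma>2} \<Longrightarrow> \<rho> y = y"
    unfolding \<rho>_def using rho_eval[of \<gamma>1 \<gamma>3 \<gamma>2] d12 d13 d23 by auto
  note dd = d12 d13 d23 d12[THEN not_sym] d13[THEN not_sym] d23[THEN not_sym]
  have cases4: "y = \<gamma>1 \<or> y = \<gamma>3 \<or> y = \<gamma>2 \<or> y \<notin> {\<gamma>1, \<gamma>3, \<gamma>2}" for y by blast
  have rhoG: "\<rho> \<gamma> \<in> \<Gamma>" if "\<gamma> \<in> \<Gamma>" for \<gamma>
    using cases4[of \<gamma>] proof (elim disjE)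
  qed (simp_all add: rho gG that)
  have rho3: "\<rho> (\<rho> (\<rho> y)) = y" for y
    using cases4[of y] proof (elim disjE)
  qed (simp_all add: rho)
  have wG': "w \<gamma> = \<rho> \<gamma>" if "\<gamma> \<in> \<Gamma>" for \<gamma>
  proof -
    have "w \<gamma> = transpose \<gamma>1 \<gamma>2 (transpose \<gamma>2 \<gamma>3 (transpose \<gamma>1 \<gamma>2 (transpose \<gamma>2 \<gamma>3 \<gamma>)))"
      unfolding w_def using that t1 t2 i1 i2 tr1 tr2 by simp
    also have "\<dots> = \<rho> \<gamma>"
      using cases4[of \<gamma>] proof (elim disjE)
    qed (simp_all add: rho dd transpose_def)
    finally show ?thesis .
  qed
  have wD: "w x \<in> D" if "x \<in> D" for x
  proof (rule ccontr)
    assume "w x \<notin> D"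
    moreover have "w x \<in> \<Omega>" using PG_in[OF PG wG] that DO by blast
    ultimately have wxG: "w x \<in> \<Gamma>" using \<Gamma>_def by blast
    have "w (\<rho> (\<rho> (w x))) = w x" using wG'[OF rhoG[OF rhoG[OF wxG]]] rho3 by simp
    then have "\<rho> (\<rho> (w x)) = x" using PG_inj[OF PG wG] by blast
    then show False using rhoG[OF rhoG[OF wxG]] that \<Gamma>_def by auto
  qed
  obtain x0 where x0: "x0 \<in> D" using cy by (auto simp: cyc_def)
  obtain j where j: "(c ^^ j) x0 = w x0" using cyc_orbit[OF cy x0 wD[OF x0]] by blast
  have wcp: "w ((c ^^ i) y) = (c ^^ i) (w y)" for i y
    using norm_pow[where h=w and c=c and e=1] wc by simp
  have wDc: "w x = (c ^^ j) x" if xD: "x \<in> D" for x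
  proof -
    obtain i where i: "(c ^^ i) x0 = x" using cyc_orbit[OF cy x0 xD] by blast
    have "w x = (c ^^ i) ((c ^^ j) x0)" using i wcp j by metis
    also have "\<dots> = (c ^^ j) ((c ^^ i) x0)"
    proof -
      have cc: "c ^^ i \<circ> c ^^ j = c ^^ j \<circ> c ^^ i" by (metis funpow_add add.commute)
      then show ?thesis by (metis comp_apply)
    qed
    finally show ?thesis using i by simp
  qed
  have cp: "c ^^ p = id" using cy by (simp add: cyc_def)
  have wpD: "(w ^^ k) x = (c ^^ (j * k)) x" if "x \<in> D" for x k
  proof (induction k)
    case (Suc k)
    have "(w ^^ Suc k) x = w ((c ^^ (j * k)) x)" using Suc by simp
    also have "\<dots> = (c ^^ j) ((c ^^ (j * k)) x)" using wDc cyc_pow_in[OF cy that] by blast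
    also have "\<dots> = (c ^^ (j * Suc k)) x" by (simp add: funpow_add)
    finally show ?case .
  qed simp
  have wpG: "(w ^^ k) x = (\<rho> ^^ k) x" if "x \<in> \<Gamma>" for x k
  proof -
    have "(w ^^ k) x = (\<rho> ^^ k) x \<and> (\<rho> ^^ k) x \<in> \<Gamma>"
    proof (induction k)
      case (Suc k)
      then show ?case using wG' rhoG by simp
    qed (simp add: that)
    then show ?thesis by blast
  qed
  have rhofix: "\<rho> x = x" if "x \<notin> \<Gamma>" for x
  proof -
    have "x \<notin> {\<gamma>1, \<gamma>3, \<gamma>2}" using that gG by blast
    then show ?thesis using rho(4) by blast
  qed
  have rhopfix: "(\<rho> ^^ k) x = x" if "x \<notin> \<Gamma>" for x k
    by (induction k) (simp_all add: rhofix that)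
  have wout: "(w ^^ k) x = x" if "x \<notin> \<Omega>" for x k
    using PG_out[OF PG PG_pow[OF PG wG] that] .
  have wp: "w ^^ p = \<rho> ^^ p"
  proof
    fix x
    show "(w ^^ p) x = (\<rho> ^^ p) x"
    proof (cases "x \<in> D")
      case True
      have "(w ^^ p) x = (c ^^ (p * j)) x" using wpD[OF True] by (simp add: mult.commute)
      also have "\<dots> = x" using pow_period[OF cp] by simp
      finally show ?thesis using rhopfix True \<Gamma>_def by simp
    next
      case False
      show ?thesis
      proof (cases "x \<in> \<Omega>")
        case True
        then show ?thesis using wpG False \<Gamma>_def by simp
      next
        case False
        then show ?thesis using wout rhopfix \<Gamma>_def by simp
      qed
    qed
  qed
  have r3: "\<rho> ^^ 3 = id" using rho3 by (simp add: fun_eq_iff numeral_3_eq_3)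
  have "p mod 3 \<noteq> 0"
  proof
    assume "p mod 3 = 0"
    then have "3 dvd p" by auto
    moreover have "1 < p \<and> (\<forall>m. m dvd p \<longrightarrow> m = 1 \<or> m = p)" by (rule prime_nat_iff[THEN iffD1, OF pr])
    ultimately have "(3::nat) = 1 \<or> 3 = p" by blast
    then show False using p3 by simp
  qed
  moreover have "p mod 3 < 3" by simp
  ultimately have "p mod 3 = 1 \<or> p mod 3 = 2" by linarith
  then show ?thesis
  proof
    assume "p mod 3 = 1"
    then have "w ^^ p = cycle_of_list [\<gamma>1, \<gamma>3, \<gamma>2]"
      using wp pow_mod_period[OF r3, of p] \<rho>_def by simp
    then have "cycle_of_list [\<gamma>1, \<gamma>3, \<gamma>2] \<in> G" using PG_pow[OF PG wG, of p] by simp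
    then show ?thesis using g1 g2 g3 d12 d13 d23 by blast
  next
    assume "p mod 3 = 2"
    then have "w ^^ p = \<rho> \<circ> \<rho>"
      using wp pow_mod_period[OF r3, of p] by (simp add: numeral_2_eq_2)
    also have "\<rho> \<circ> \<rho> = cycle_of_list [\<gamma>1, \<gamma>2, \<gamma>3]"
    proof
      fix y
      show "(\<rho> \<circ> \<rho>) y = cycle_of_list [\<gamma>1, \<gamma>2, \<gamma>3] y"
        using cases4[of y] proof (elim disjE)
      qed (simp_all add: rho dd rho_eval[of \<gamma>1 \<gamma>2 \<gamma>3, OF d12 d13 d23])
    qed
    finally have "cycle_of_list [\<gamma>1, \<gamma>2, \<gamma>3] \<in> G" using PG_pow[OF PG wG, of p] by simp
    then show ?thesis using g1 g2 g3 d12 d13 d23 by blast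
  qed
qed


lemma orbit_period:
  assumes perm: "permutation f"
  shows "(f ^^ card (orbit f y)) y = y" "0 < card (orbit f y)"
proof -
  obtain n0 where n0: "0 < n0" "(f ^^ n0) y = y" using permutation_self[OF perm] by blast
  define d where "d = (LEAST d. 0 < d \<and> (f ^^ d) y = y)"
  have d: "0 < d" "(f ^^ d) y = y" using LeastI_ex[of "\<lambda>d. 0 < d \<and> (f ^^ d) y = y"] n0 d_def by blast+
  have dmin: "\<not> ((f ^^ m) y = y)" if "0 < m" "m < d" for m
    using not_less_Least[of m "\<lambda>d. 0 < d \<and> (f ^^ d) y = y"] that d_def by blast
  have orb: "orbit f y = (\<lambda>m. (f ^^ m) y) ` {..<d}"
    using orbit_altdef_bounded[OF d(2) d(1)] by auto
  have bij: "bij f" using perm by (simp add: permutation_bijective)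
  have inj: "inj_on (\<lambda>m. (f ^^ m) y) {..<d}"
  proof (rule inj_onI)
    fix i j assume i: "i \<in> {..<d}" and j: "j \<in> {..<d}" and e: "(f ^^ i) y = (f ^^ j) y"
    show "i = j"
    proof (rule ccontr)
      assume "i \<noteq> j"
      then consider "i < j" | "j < i" by linarith
      then show False
      proof cases
        case 1
        have "(f ^^ i) ((f ^^ (j - i)) y) = (f ^^ i) y"
          using e 1 by (metis funpow_add le_add_diff_inverse less_imp_le comp_apply)
        then have "(f ^^ (j - i)) y = y" using inj_fn[OF bij_is_inj[OF bij], of i] by (meson injD)
        then show False using dmin[of "j - i"] 1 j by (auto simp: less_imp_diff_less)
      next
        case 2
        have "(f ^^ j) ((f ^^ (i - j)) y) = (f ^^ j) y"
          using e 2 by (metis funpow_add le_add_diff_inverse less_imp_le comp_apply)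
        then have "(f ^^ (i - j)) y = y" using inj_fn[OF bij_is_inj[OF bij], of j] by (meson injD)
        then show False using dmin[of "i - j"] 2 i by (auto simp: less_imp_diff_less)
      qed
    qed
  qed
  have "card (orbit f y) = d" using orb card_image[OF inj] by simp
  then show "(f ^^ card (orbit f y)) y = y" "0 < card (orbit f y)" using d by auto
qed

lemma pt_pow_period: "(f ^^ k) y = y \<Longrightarrow> (f ^^ (k * q)) y = y"
proof (induction q)
  case (Suc q)
  have "(f ^^ (k * Suc q)) y = (f ^^ k) ((f ^^ (k * q)) y)" by (simp add: funpow_add)
  then show ?case using Suc by simp
qed simp

lemma pt_pow_mod: "(f ^^ k) y = y \<Longrightarrow> (f ^^ a) y = (f ^^ (a mod k)) y"
proof -
  assume h: "(f ^^ k) y = y"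
  have "(f ^^ a) y = (f ^^ (a mod k + k * (a div k))) y" by (simp only: mod_mult_div_eq)
  also have "\<dots> = (f ^^ (a mod k)) ((f ^^ (k * (a div k))) y)" by (simp only: funpow_add comp_apply)
  also have "\<dots> = (f ^^ (a mod k)) y" using pt_pow_period[OF h] by simp
  finally show ?thesis .
qed

lemma get_cycle:
  assumes pp: "\<pi> permutes {1..n}" and x: "x \<in> {1..n}" and cx: "card (orbit \<pi> x) = p"
    and pr: "prime p" and n2p: "n < 2 * p"
  shows "cyc (\<pi> ^^ fact (n - p)) (orbit \<pi> x) p \<and> orbit \<pi> x \<subseteq> {1..n}"
proof -
  define Ob where "Ob = orbit \<pi> x"
  define L where "L = (fact (n - p) :: nat)"
  define c where "c = \<pi> ^^ L"
  have perm: "permutation \<pi>" using pp by (auto simp: permutation_permutes)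
  have p1: "1 < p" using pr prime_gt_1_nat by blast
  have ObO: "Ob \<subseteq> {1..n}" using permutes_orbit_subset[OF pp x] Ob_def by simp
  have finO: "finite Ob" using ObO finite_subset by blast
  have cO: "card Ob = p" using cx Ob_def by simp
  have cyc_on: "cyclic_on \<pi> Ob" using cyclic_on_orbit'[OF perm] Ob_def by simp
  have orbO: "orbit \<pi> y = Ob" if "y \<in> Ob" for y using orbit_cyclic_eq3[OF cyc_on that] .
  have pO: "(\<pi> ^^ p) y = y" if "y \<in> Ob" for y using orbit_period(1)[OF perm, of y] orbO[OF that] cO by simp
  have pn: "p \<le> n" using cO ObO card_mono[of "{1..n}" Ob] by simp
  have Lnot: "\<not> p dvd L" unfolding L_def using prime_dvd_fact_iff[OF pr] n2p by simp
  have cfix: "c y = y" if "y \<notin> Ob" for y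
  proof (cases "y \<in> {1..n}")
    case False
    have "(\<pi> ^^ k) y = y" for k
      by (induction k) (simp_all add: permutes_not_in[OF pp False])
    then show ?thesis unfolding c_def by simp
  next
    case True
    have yo: "orbit \<pi> y \<subseteq> {1..n} - Ob"
    proof
      fix z assume z: "z \<in> orbit \<pi> y"
      have "z \<in> {1..n}" using permutes_orbit_subset[OF pp True] z by blast
      moreover have "z \<notin> Ob"
      proof
        assume "z \<in> Ob"
        then have "orbit \<pi> z = Ob" by (rule orbO)
        moreover have "orbit \<pi> z = orbit \<pi> y" using orbit_cyclic_eq3[OF cyclic_on_orbit'[OF perm] z] by simp
        ultimately have "y \<in> Ob" using permutation_self_in_orbit[OF perm, of y] by simp
        then show False using that by simp
      qed
      ultimately show "z \<in> {1..n} - Ob" by blast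
    qed
    define k where "k = card (orbit \<pi> y)"
    have k0: "0 < k" using orbit_period(2)[OF perm] k_def by simp
    have "k \<le> card ({1..n} - Ob)" using card_mono[OF _ yo] k_def by simp
    also have "\<dots> = n - p" using ObO cO finO by (simp add: card_Diff_subset)
    finally have "k dvd L" unfolding L_def using k0 by (intro dvd_fact) auto
    then obtain q where "L = k * q" by blast
    then show ?thesis unfolding c_def using pt_pow_period[OF orbit_period(1)[OF perm, of y]] k_def by simp
  qed
  have cp: "c ^^ p = id"
  proof
    fix y
    show "(c ^^ p) y = id y"
    proof (cases "y \<in> Ob")
      case True
      have "(c ^^ p) y = (\<pi> ^^ (p * L)) y" unfolding c_def by (simp add: funpow_mult mult.commute)
      also have "\<dots> = y" using pt_pow_period[OF pO[OF True]] by simp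
      finally show ?thesis by simp
    next
      case False
      have "(c ^^ k) y = y" for k by (induction k) (simp_all add: cfix False)
      then show ?thesis by simp
    qed
  qed
  have x0: "x \<in> Ob" using permutation_self_in_orbit[OF perm] Ob_def by simp
  have cin: "c y \<in> Ob" if "y \<in> Ob" for y
    unfolding c_def using funpow_in_orbit[of y \<pi> x] that Ob_def by simp
  have surj: "\<exists>i. (c ^^ i) x = y" if yO: "y \<in> Ob" for y
  proof -
    have "Ob = {(\<pi> ^^ m) x | m. m < p}" using orbit_altdef_bounded[OF pO[OF x0]] p1 Ob_def by simp
    then obtain m where m: "m < p" "(\<pi> ^^ m) x = y" using yO by blast
    have "0 < L mod p" using Lnot by (simp add: dvd_eq_mod_eq_0)
    moreover have "L mod p < p" using p1 by simp
    ultimately obtain r where r: "((L mod p) * r) mod p = 1" using modinv[OF pr] by blast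
    have "(c ^^ (r * m)) x = (\<pi> ^^ (L * (r * m))) x" unfolding c_def by (simp add: funpow_mult)
    also have "\<dots> = (\<pi> ^^ ((L * (r * m)) mod p)) x" using pt_pow_mod[OF pO[OF x0]] by blast
    also have "(L * (r * m)) mod p = m"
    proof -
      have "(L * (r * m)) mod p = (((L mod p) * r) mod p * m) mod p"
        by (metis mod_mult_left_eq mult.assoc)
      also have "\<dots> = m" using r m by simp
      finally show ?thesis .
    qed
    finally show ?thesis using m by blast
  qed
  have "cyc c Ob p" unfolding cyc_def using cfix cp cO finO cin x0 surj by blast
  then show ?thesis using ObO unfolding c_def L_def Ob_def by simp
qed

lemma not_p2_dvd_fact:
  assumes pr: "prime p" and pn: "p \<le> n" and n2p: "n < 2 * p"
  shows "\<not> p ^ 2 dvd fact n"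
proof
  assume h: "p ^ 2 dvd fact n"
  have p0: "0 < p" using pr prime_gt_0_nat by blast
  have fn: "(fact n :: nat) = \<Prod>{1..n}" by (simp add: fact_prod)
  have pin: "p \<in> {1..n}" using pn p0 by simp
  have "\<Prod>{1..n} = p * \<Prod>({1..n} - {p})" using prod.remove[OF _ pin, of id] by simp
  then have "p * p dvd p * \<Prod>({1..n} - {p})" using h fn by (simp add: power2_eq_square)
  then have "p dvd \<Prod>({1..n} - {p})" using p0 by simp
  then have "\<exists>i\<in>{1..n} - {p}. p dvd i" using prime_dvd_prod_iff[of "{1..n} - {p}" p "\<lambda>x. x"] pr by simp
  then obtain i where i: "i \<in> {1..n} - {p}" "p dvd i" by blast
  then obtain q where q: "i = p * q" by blast
  have "q \<noteq> 0" using i q by auto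
  moreover have "q \<noteq> 1" using i q by auto
  ultimately have "2 \<le> q" by linarith
  then have "2 * p \<le> i" using q by simp
  then show False using i n2p by simp
qed


lemma PG_of_subgroup:
  assumes "subgroup K (sym_group n)" shows "PG {1..n} K"
proof -
  have sub: "K \<subseteq> carrier (sym_group n)" using subgroup.subset[OF assms] .
  have "id \<in> K" using subgroup.one_closed[OF assms] by (simp add: sym_group_one)
  moreover have "g \<circ> h \<in> K" if "g \<in> K" "h \<in> K" for g h
    using subgroup.m_closed[OF assms that] by (simp add: sym_group_mult)
  moreover have "inv' g \<in> K" if "g \<in> K" for g
    using subgroup.m_inv_closed[OF assms that] sym_group_inv_equality[of g n] sub that by auto
  moreover have "g permutes {1..n}" if "g \<in> K" for g using sub that by (auto simp: sym_group_carrier)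
  ultimately show ?thesis unfolding PG_def by blast
qed

lemma subgroup_of_PG:
  assumes PG: "PG {1..n} K" shows "subgroup K (sym_group n)"
proof (rule group.subgroupI[OF sym_group_is_group])
  show "K \<subseteq> carrier (sym_group n)" using PG_perm[OF PG] by (auto simp: sym_group_carrier)
  show "K \<noteq> {}" using PG_id[OF PG] by blast
  show "inv\<^bsub>sym_group n\<^esub> a \<in> K" if "a \<in> K" for a
    using PG_inv[OF PG that] PG_perm[OF PG that] sym_group_inv_equality[of a n] by (simp add: sym_group_carrier)
  show "a \<otimes>\<^bsub>sym_group n\<^esub> b \<in> K" if "a \<in> K" "b \<in> K" for a b
    using PG_comp[OF PG that] by (simp add: sym_group_mult)
qed

lemma card_dvd_fact:
  assumes PG: "PG {1..n} K" shows "card K dvd fact n"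
proof -
  have "card (rcosets\<^bsub>sym_group n\<^esub> K) * card K = order (sym_group n)"
    using group.lagrange[OF sym_group_is_group subgroup_of_PG[OF PG]] .
  then show ?thesis using sym_group_card_carrier[of n] unfolding order_def by (metis dvd_triv_right)
qed

lemma gen_alt_sub:
  assumes PG: "PG {1..n} G" and HG: "H \<subseteq> G" and HA: "H \<subseteq> carrier (alt_group n)"
  shows "generate (alt_group n) H \<subseteq> G"
proof
  fix x assume "x \<in> generate (alt_group n) H"
  then show "x \<in> G"
  proof (induction rule: generate.induct)
    case one
    show ?case unfolding alt_group_one using PG_id[OF PG] .
  next
    case (incl h)
    then show ?case using HG by blast
  next
    case (inv h)
    then have hA: "h \<in> carrier (alt_group n)" and hG: "h \<in> G" using HA HG by auto
    show ?case unfolding alt_group_inv_equality[OF hA] using PG_inv[OF PG hG] .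
  next
    case (eng h1 h2)
    then show ?case unfolding alt_group_mult using PG_comp[OF PG] by blast
  qed
qed

lemma all_three_cycles:
  assumes PG: "PG {1..n} G" and chain: "\<And>S. S \<subseteq> \<Gamma> \<Longrightarrow> trans_on ({1..n} - S) (stab G S)"
    and GO: "\<Gamma> \<subseteq> {1..n}" and abc: "a \<in> \<Gamma>" "b \<in> \<Gamma>" "c \<in> \<Gamma>" "a \<noteq> b" "a \<noteq> c" "b \<noteq> c"
    and cG: "cycle_of_list [a, b, c] \<in> G"
  shows "three_cycles n \<subseteq> G"
proof
  fix q assume "q \<in> three_cycles n"
  then obtain cs where cs: "q = cycle_of_list cs" "cycle cs" "length cs = 3" "set cs \<subseteq> {1..n}" by auto
  obtain x y z where xyz: "cs = [x, y, z]" using stupid_lemma[OF cs(3)] by blast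
  have d: "x \<noteq> y" "x \<noteq> z" "y \<noteq> z" using cs(2) xyz by auto
  have inO: "x \<in> {1..n}" "y \<in> {1..n}" "z \<in> {1..n}" using cs(4) xyz by auto
  obtain f where fG: "f \<in> G" and f: "f x = a" "f y = b" "f z = c"
    using three_trans[OF PG chain GO abc inO d] by blast
  have fp: "f permutes {1..n}" using PG_perm[OF PG fG] .
  have bf: "bij f" using permutes_bij[OF fp] .
  have bif: "bij (inv' f)" using bij_imp_bij_inv[OF bf] .
  have cyc3: "cycle [a, b, c]" using abc by simp
  have "inv' f \<circ> cycle_of_list [a, b, c] \<circ> inv' (inv' f) = cycle_of_list (map (inv' f) [a, b, c])"
    using conjugation_of_cycle[OF cyc3 bif] .
  moreover have "inv' (inv' f) = f" using inv_inv_eq[OF bf] .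
  moreover have "map (inv' f) [a, b, c] = [x, y, z]"
    using f permutes_inverses(2)[OF fp] by (metis list.simps(8,9))
  ultimately have "q = inv' f \<circ> cycle_of_list [a, b, c] \<circ> f" using cs(1) xyz by simp
  then show "q \<in> G" using PG_comp[OF PG PG_comp[OF PG PG_inv[OF PG fG] cG] fG] by simp
qed

lemma three_elems:
  assumes "3 \<le> card A"
  shows "\<exists>a b c. a \<in> A \<and> b \<in> A \<and> c \<in> A \<and> a \<noteq> b \<and> a \<noteq> c \<and> b \<noteq> c"
proof -
  have "A \<noteq> {}" using assms by auto
  then obtain a where a: "a \<in> A" by blast
  have "card (A - {a}) \<ge> 2" using card_Diff_singleton[OF a] assms by simp
  then have "A - {a} \<noteq> {}" by (metis card.empty not_numeral_le_zero)
  then obtain b where b: "b \<in> A - {a}" by blast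
  have "card (A - {a} - {b}) \<ge> 1" using card_Diff_singleton[OF b] \<open>card (A - {a}) \<ge> 2\<close> by simp
  then have "A - {a} - {b} \<noteq> {}" by (metis card.empty not_one_le_zero)
  then obtain c where c: "c \<in> A - {a} - {b}" by blast
  show ?thesis using a b c by blast
qed

lemma alt_transitive:
  assumes "3 \<le> n" shows "transitive_on_Sn n (carrier (alt_group n))"
  unfolding transitive_on_Sn_def
proof (intro ballI)
  fix x y assume x: "x \<in> {1..n}" and y: "y \<in> {1..n}"
  show "\<exists>g\<in>carrier (alt_group n). g x = y"
  proof (cases "x = y")
    case True
    have "id \<in> carrier (alt_group n)" by (simp add: alt_group_carrier permutes_id evenperm_id)
    moreover have "id x = y" using True by simp
    ultimately show ?thesis by blast
  next
    case False
    have "card ({1..n} - {x, y}) \<ge> 1" using x y False assms by (simp add: card_Diff_subset)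
    then obtain z where z: "z \<in> {1..n} - {x, y}" by (metis all_not_in_conv card.empty not_one_le_zero)
    have "cycle_of_list [x, y, z] \<in> three_cycles n"
      using x y z False by (auto intro!: exI[of _ "[x, y, z]"])
    then have "cycle_of_list [x, y, z] \<in> carrier (alt_group n)" using three_cycles_incl by blast
    moreover have "x \<noteq> z" "y \<noteq> z" using z by auto
    then have "cycle_of_list [x, y, z] x = y" using rho_eval(1)[of x y z] False by blast
    ultimately show ?thesis by blast
  qed
qed

lemma main_core:
  fixes n p :: nat and \<pi> \<sigma> :: "nat \<Rightarrow> nat"
  assumes pr: "prime p" and n2p: "n < 2 * p" and pn: "p + 3 \<le> n"
    and \<pi>A: "\<pi> \<in> carrier (alt_group n)" and \<sigma>A: "\<sigma> \<in> carrier (alt_group n)"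
    and orb: "\<exists>x\<in>{1..n}. card (orbit \<pi> x) = p"
    and tr: "transitive_on_Sn n (generate (sym_group n) {\<pi>, \<sigma>})"
  shows "generate (sym_group n) {\<pi>, \<sigma>} = carrier (alt_group n)"
proof -
  define G where "G = generate (sym_group n) {\<pi>, \<sigma>}"
  have AS: "carrier (alt_group n) \<subseteq> carrier (sym_group n)"
    by (auto simp: alt_group_carrier sym_group_carrier)
  have S: "{\<pi>, \<sigma>} \<subseteq> carrier (sym_group n)" using \<pi>A \<sigma>A AS by blast
  have subG: "subgroup G (sym_group n)"
    unfolding G_def using group.generate_is_subgroup[OF sym_group_is_group S] .
  have SA: "{\<pi>, \<sigma>} \<subseteq> carrier (alt_group n)" using \<pi>A \<sigma>A by blast
  have GA: "G \<subseteq> carrier (alt_group n)" unfolding G_def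
    using group.generate_subgroup_incl[OF sym_group_is_group SA alt_group_is_subgroup] .
  have PG: "PG {1..n} G" using PG_of_subgroup[OF subG] .
  have finG: "finite G"
  proof -
    have "G \<subseteq> {q. q permutes {1..n}}" using GA AS by (auto simp: sym_group_carrier)
    then show ?thesis using finite_permutations[of "{1..n}"] finite_subset by blast
  qed
  have \<pi>G: "\<pi> \<in> G" unfolding G_def by (rule generate.incl) simp
  have \<pi>p: "\<pi> permutes {1..n}" using \<pi>A by (simp add: alt_group_carrier)
  obtain x where x: "x \<in> {1..n}" "card (orbit \<pi> x) = p" using orb by blast
  define Ob where "Ob = orbit \<pi> x"
  define c where "c = \<pi> ^^ fact (n - p)"
  have cy: "cyc c Ob p" and ObO: "Ob \<subseteq> {1..n}"
    using get_cycle[OF \<pi>p x pr n2p] unfolding c_def Ob_def by auto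
  have cG: "c \<in> G" unfolding c_def using PG_pow[OF PG \<pi>G] .
  have trG: "trans_on {1..n} G" using tr unfolding G_def transitive_on_Sn_def trans_on_def .
  have cn: "card {1..n} < 2 * p" using n2p by simp
  have chain: "\<And>S. S \<subseteq> {1..n} - Ob \<Longrightarrow> trans_on ({1..n} - S) (stab G S)"
    using chain[OF PG _ trG cG cy ObO pr cn] by simp
  have ndvd: "\<not> p ^ 2 dvd card (stab G ({1..n} - Ob))"
  proof
    assume "p ^ 2 dvd card (stab G ({1..n} - Ob))"
    moreover have "card (stab G ({1..n} - Ob)) dvd fact n" using card_dvd_fact[OF PG_stab[OF PG]] .
    ultimately have "p ^ 2 dvd fact n" by (rule dvd_trans)
    then show False using not_p2_dvd_fact[OF pr _ n2p] pn by simp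
  qed
  have cOb: "card Ob = p" using cy by (simp add: cyc_def)
  have "card ({1..n} - Ob) = n - p" using ObO cOb by (simp add: card_Diff_subset finite_subset)
  then have "3 \<le> card ({1..n} - Ob)" using pn by simp
  then obtain g1 g2 g3 where gs: "g1 \<in> {1..n} - Ob" "g2 \<in> {1..n} - Ob" "g3 \<in> {1..n} - Ob"
    "g1 \<noteq> g2" "g1 \<noteq> g3" "g2 \<noteq> g3" using three_elems by blast
  have p3: "3 < p" using pn n2p by linarith
  obtain a b c' where abc: "a \<in> {1..n} - Ob" "b \<in> {1..n} - Ob" "c' \<in> {1..n} - Ob"
    "a \<noteq> b" "a \<noteq> c'" "b \<noteq> c'" and cycG: "cycle_of_list [a, b, c'] \<in> G"
    using three_cycle_exists[OF PG finG cG cy ObO pr p3 ndvd chain gs] by blast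
  have "three_cycles n \<subseteq> G"
    using all_three_cycles[OF PG chain _ abc cycG] by blast
  then have "generate (alt_group n) (three_cycles n) \<subseteq> G"
    using gen_alt_sub[OF PG _ three_cycles_incl] by blast
  then have "carrier (alt_group n) \<subseteq> G" using alt_group_carrier_as_three_cycles by blast
  then show ?thesis using GA G_def by blast
qed

theorem corollary5p3:
  fixes n p :: nat and \<pi> :: "nat \<Rightarrow> nat" and C :: "(nat \<Rightarrow> nat) set"
  assumes "prime p" and "n < 2 * p" and "p + 3 \<le> n"
    and "\<pi> \<in> carrier (alt_group n)"
    and "\<exists>x\<in>{1..n}. card (orbit \<pi> x) = p"
    and "is_conj_class_Sn n C"
  shows "card {\<sigma> \<in> carrier (alt_group n). commutator_Sn n \<pi> \<sigma> \<in> C \<and>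
                 generate (sym_group n) {\<pi>, \<sigma>} = carrier (alt_group n)}
       = card {\<sigma> \<in> carrier (alt_group n). commutator_Sn n \<pi> \<sigma> \<in> C}
         - card {\<sigma> \<in> carrier (alt_group n). commutator_Sn n \<pi> \<sigma> \<in> C \<and>
                 \<not> transitive_on_Sn n (generate (sym_group n) {\<pi>, \<sigma>})}"
proof -
  define B where "B = {\<sigma> \<in> carrier (alt_group n). commutator_Sn n \<pi> \<sigma> \<in> C}"
  define N where "N = {\<sigma> \<in> carrier (alt_group n). commutator_Sn n \<pi> \<sigma> \<in> C \<and>
                 \<not> transitive_on_Sn n (generate (sym_group n) {\<pi>, \<sigma>})}"
  have n3: "3 \<le> n" using assms(3) by simp
  have eq: "{\<sigma> \<in> carrier (alt_group n). commutator_Sn n \<pi> \<sigma> \<in> C \<and>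
                 generate (sym_group n) {\<pi>, \<sigma>} = carrier (alt_group n)} = B - N"
  proof -
    have "(\<sigma> \<in> carrier (alt_group n) \<and> commutator_Sn n \<pi> \<sigma> \<in> C \<and>
                 generate (sym_group n) {\<pi>, \<sigma>} = carrier (alt_group n)) \<longleftrightarrow> \<sigma> \<in> B - N" for \<sigma>
    proof (cases "\<sigma> \<in> carrier (alt_group n) \<and> commutator_Sn n \<pi> \<sigma> \<in> C")
      case True
      have "generate (sym_group n) {\<pi>, \<sigma>} = carrier (alt_group n) \<longleftrightarrow>
            transitive_on_Sn n (generate (sym_group n) {\<pi>, \<sigma>})"
        using main_core[OF assms(1,2,3,4) _ assms(5)] alt_transitive[OF n3] True by metis
      then show ?thesis using True unfolding B_def N_def by blast
    next
      case False
      then show ?thesis unfolding B_def N_def by blast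
    qed
    then show ?thesis by blast
  qed
  have finA: "finite (carrier (alt_group n))"
  proof -
    have "carrier (alt_group n) \<subseteq> {q. q permutes {1..n}}" by (auto simp: alt_group_carrier)
    then show ?thesis using finite_permutations[of "{1..n}"] finite_subset by blast
  qed
  have NB: "N \<subseteq> B" unfolding N_def B_def by blast
  have finN: "finite N" using finA unfolding N_def by simp
  show ?thesis unfolding eq using card_Diff_subset[OF finN NB] B_def N_def by simp
qed


end
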